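(* Let $F:\mathbb{R}^n\rightrightarrows\mathbb{R}^p$ and $G:\mathbb{R}^p\rightrightarrows\mathbb{R}^q$ be nearly convex set-valued mappings with $\operatorname{ri}(\operatorname{rge} F)\cap\operatorname{ri}(\operatorname{dom} G)\neq\emptyset$. Define $M_0(x,z)=\operatorname{ri} F(x)\cap\operatorname{ri} G^{-1}(z)$ for $(x,z)\in\mathbb{R}^n\times\mathbb{R}^q$ and $\operatorname{dom} M_0=\{(x,z):M_0(x,z)\neq\emptyset\}$. Then $$\operatorname{ri}\big(\operatorname{gph}(G\circ F)\big)=\big[\operatorname{ri}(\operatorname{dom} F)\times\operatorname{ri}(\operatorname{rge} G)\big]\cap\operatorname{dom} M_0.$$
   Context: A set $\Omega\subset\mathbb{R}^k$ is nearly convex if there is a convex set $C$ with $C\subset\Omega\subset\overline{C}$. For an arbitrary set $\Omega$, $\operatorname{ri}\Omega=\{a\in\Omega:\exists\delta>0,\ B(a;\delta)\cap\operatorname{aff}\Omega\subset\Omega\}$. For a set-valued mapping $F$: $\operatorname{dom} F=\{x:F(x)\neq\emptyset\}$, $\operatorname{rge} F=\bigcup_x F(x)$, $\operatorname{gph} F=\{(x,y):y\in F(x)\}$; $F$ is nearly convex if $\operatorname{gph} F$ is nearly convex. $G^{-1}(z)=\{y: z\in G(y)\}$, and $(G\circ F)(x)=\bigcup_{y\in F(x)}G(y)$. *)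

theory Defs
  imports "HOL-Analysis.Analysis"
begin

definition nearly_convex :: "'a::real_normed_vector set \<Rightarrow> bool" where
  "nearly_convex \<Omega> \<longleftrightarrow> (\<exists>C. convex C \<and> C \<subseteq> \<Omega> \<and> \<Omega> \<subseteq> closure C)"

definition ri :: "'a::real_normed_vector set \<Rightarrow> 'a set" where
  "ri \<Omega> = {a \<in> \<Omega>. \<exists>\<delta>>0. ball a \<delta> \<inter> affine hull \<Omega> \<subseteq> \<Omega>}"

definition sv_dom :: "('a \<Rightarrow> 'b set) \<Rightarrow> 'a set" where
  "sv_dom F = {x. F x \<noteq> {}}"

definition sv_rge :: "('a \<Rightarrow> 'b set) \<Rightarrow> 'b set" where
  "sv_rge F = (\<Union>x. F x)"

definition sv_gph :: "('a \<Rightarrow> 'b set) \<Rightarrow> ('a \<times> 'b) set" where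
  "sv_gph F = {(x, y). y \<in> F x}"

definition sv_inv :: "('a \<Rightarrow> 'b set) \<Rightarrow> 'b \<Rightarrow> 'a set" where
  "sv_inv G z = {y. z \<in> G y}"

definition sv_comp :: "('b \<Rightarrow> 'c set) \<Rightarrow> ('a \<Rightarrow> 'b set) \<Rightarrow> 'a \<Rightarrow> 'c set" where
  "sv_comp G F x = (\<Union>y\<in>F x. G y)"

definition nearly_convex_map :: "('a::real_normed_vector \<Rightarrow> 'b::real_normed_vector set) \<Rightarrow> bool" where
  "nearly_convex_map F \<longleftrightarrow> nearly_convex (sv_gph F)"

end

theory Submission
  imports Defs
begin

lemma ri_eq: fixes S :: "'n::euclidean_space set" shows "ri S = rel_interior S"
  unfolding ri_def using mem_rel_interior_ball by auto

lemma sandwich: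
  fixes A W :: "'n::euclidean_space set"
  assumes "convex A" "A \<subseteq> W" "W \<subseteq> closure A"
  shows "rel_interior W = rel_interior A"
proof -
  have h1: "affine hull A \<subseteq> affine hull W" by (rule hull_mono[OF assms(2)])
  have "affine hull W \<subseteq> affine hull (closure A)" by (rule hull_mono[OF assms(3)])
  then have h2: "affine hull W = affine hull A" using h1 closure_same_affine_hull by blast
  have "rel_interior A \<subseteq> rel_interior W" using subset_rel_interior[OF assms(2)] h2 by simp
  moreover have "rel_interior W \<subseteq> rel_interior (closure A)"
    using subset_rel_interior[OF assms(3)] h2 closure_same_affine_hull by metis
  ultimately show ?thesis using convex_rel_interior_closure[OF assms(1)] by blast
qed

lemma sandwich2:
  fixes A B W :: "'n::euclidean_space set"
  assumes "convex A" "convex B" "A \<subseteq> W" "W \<subseteq> B" "rel_interior A = rel_interior B"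
  shows "rel_interior W = rel_interior A"
proof -
  have "closure A = closure B" using assms convex_closure_rel_interior by metis
  then have "W \<subseteq> closure A" using assms(4) closure_subset by blast
  then show ?thesis using sandwich assms by blast
qed

lemma proj:
  fixes f :: "'m::euclidean_space \<Rightarrow> 'n::euclidean_space"
  assumes "linear f" "convex R" "rel_interior R = R" "R \<subseteq> W" "W \<subseteq> closure R"
  shows "rel_interior (f ` W) = f ` R"
proof -
  have "f ` W \<subseteq> closure (f ` R)"
    using assms(5) closure_linear_image_subset[OF assms(1), of R] by blast
  moreover have "convex (f ` R)" using assms convex_linear_image by blast
  ultimately have "rel_interior (f ` W) = rel_interior (f ` R)"
    using sandwich assms(4) by blast
  then show ?thesis using rel_interior_convex_linear_image[OF assms(1,2)] assms(3) by simp
qed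

lemma convex_fiber:
  assumes "convex (R :: ('m::euclidean_space \<times> 'n::euclidean_space) set)"
  shows "convex {y. (x, y) \<in> R}"
  unfolding convex_def
proof (intro allI impI ballI, clarify)
  fix y1 y2 and u v :: real
  assume a: "(x, y1) \<in> R" "(x, y2) \<in> R" "0 \<le> u" "0 \<le> v" "u + v = 1"
  have "u *\<^sub>R (x, y1) + v *\<^sub>R (x, y2) \<in> R" using convexD[OF assms a(1,2)] a by blast
  moreover have "u *\<^sub>R (x, y1) + v *\<^sub>R (x, y2) = (x, u *\<^sub>R y1 + v *\<^sub>R y2)"
    using a(5) by (simp add: scaleR_add_left[symmetric])
  ultimately show "(x, u *\<^sub>R y1 + v *\<^sub>R y2) \<in> R" by simp
qed

lemma fiber:
  fixes R W :: "('m::euclidean_space \<times> 'n::euclidean_space) set"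
  assumes "convex R" "rel_interior R = R" "R \<subseteq> W" "W \<subseteq> closure R"
  shows "(x, y) \<in> R \<longleftrightarrow> x \<in> rel_interior (fst ` W) \<and> y \<in> rel_interior {y. (x, y) \<in> W}"
proof -
  have lf: "linear (fst :: 'm \<times> 'n \<Rightarrow> 'm)" by (rule linear_fst)
  have dW: "rel_interior (fst ` W) = fst ` R" using proj[OF lf assms] .
  have dR: "rel_interior (fst ` R) = fst ` R" using proj[OF lf assms(1,2)] closure_subset by blast
  have cc: "convex (closure R)" using assms(1) convex_closure by blast
  have dC: "rel_interior (fst ` closure R) = fst ` R"
    using proj[OF lf assms(1,2), of "closure R"] closure_subset by blast
  have e1: "{x. {z. (x, z) \<in> R} \<noteq> {}} = fst ` R" by force
  have e2: "{x. {z. (x, z) \<in> closure R} \<noteq> {}} = fst ` closure R" by force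
  note q1 = rel_interior_projection[OF assms(1) refl, of x]
  note q2 = rel_interior_projection[OF cc refl, of x]
  have p1: "\<And>y. (x, y) \<in> R \<longleftrightarrow> x \<in> fst ` R \<and> y \<in> rel_interior {z. (x, z) \<in> R}"
    using q1 unfolding e1 dR assms(2) .
  have p2: "\<And>y. (x, y) \<in> R \<longleftrightarrow> x \<in> fst ` R \<and> y \<in> rel_interior {z. (x, z) \<in> closure R}"
    using q2 unfolding e2 dC convex_rel_interior_closure[OF assms(1)] assms(2) .
  show ?thesis
  proof (cases "x \<in> fst ` R")
    case False
    have "(x, y) \<notin> R" using False by force
    then show ?thesis unfolding dW using False by blast
  next
    case True
    have eq: "rel_interior {z. (x, z) \<in> R} = rel_interior {z. (x, z) \<in> closure R}"
      using p1 p2 True by blast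
    have rW: "rel_interior {z. (x, z) \<in> W} = rel_interior {z. (x, z) \<in> R}"
      apply (rule sandwich2[OF convex_fiber[OF assms(1)] convex_fiber[OF cc] _ _ eq])
      using assms(3,4) by auto
    show ?thesis unfolding dW rW using p1[of y] True by blast
  qed
qed

theorem theorem3p8:
  fixes F :: "'a::euclidean_space \<Rightarrow> 'b::euclidean_space set"
    and G :: "'b \<Rightarrow> 'c::euclidean_space set"
  assumes "nearly_convex_map F"
    and "nearly_convex_map G"
    and "ri (sv_rge F) \<inter> ri (sv_dom G) \<noteq> {}"
  shows "ri (sv_gph (sv_comp G F)) =
    (ri (sv_dom F) \<times> ri (sv_rge G)) \<inter>
    {(x, z). ri (F x) \<inter> ri (sv_inv G z) \<noteq> {}}"
proof -
  define W1 where "W1 = sv_gph F"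
  define W2 where "W2 = sv_gph G"
  obtain C1 where C1: "convex C1" "C1 \<subseteq> W1" "W1 \<subseteq> closure C1"
    using assms(1) unfolding nearly_convex_map_def nearly_convex_def W1_def by blast
  obtain C2 where C2: "convex C2" "C2 \<subseteq> W2" "W2 \<subseteq> closure C2"
    using assms(2) unfolding nearly_convex_map_def nearly_convex_def W2_def by blast
  define R1 where "R1 = rel_interior C1"
  define R2 where "R2 = rel_interior C2"
  have R1: "convex R1" "rel_interior R1 = R1" "R1 \<subseteq> W1" "W1 \<subseteq> closure R1"
    using C1 convex_rel_interior rel_interior_rel_interior convex_closure_rel_interior
      rel_interior_subset unfolding R1_def by blast+
  have R2: "convex R2" "rel_interior R2 = R2" "R2 \<subseteq> W2" "W2 \<subseteq> closure R2"
    using C2 convex_rel_interior rel_interior_rel_interior convex_closure_rel_interior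
      rel_interior_subset unfolding R2_def by blast+
  have lsw: "linear (prod.swap :: 'b \<times> 'c \<Rightarrow> 'c \<times> 'b)"
    by (rule linearI) auto
  have isw: "inj (prod.swap :: 'b \<times> 'c \<Rightarrow> 'c \<times> 'b)" by (simp add: inj_on_def)
  define S2 where "S2 = prod.swap ` R2"
  define V2 where "V2 = prod.swap ` W2"
  have S2: "convex S2" "rel_interior S2 = S2" "S2 \<subseteq> V2" "V2 \<subseteq> closure S2"
  proof -
    show "convex S2" unfolding S2_def using convex_linear_image[OF lsw R2(1)] .
    show "rel_interior S2 = S2" unfolding S2_def
      using rel_interior_convex_linear_image[OF lsw R2(1)] R2(2) by simp
    show "S2 \<subseteq> V2" unfolding S2_def V2_def using R2(3) by blast
    show "V2 \<subseteq> closure S2" unfolding S2_def V2_def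
      using R2(4) closure_injective_linear_image[OF lsw isw, of R2] by blast
  qed
  have fx1: "\<And>x y. (x, y) \<in> R1 \<longleftrightarrow> x \<in> ri (sv_dom F) \<and> y \<in> ri (F x)"
  proof -
    fix x y
    have "fst ` W1 = sv_dom F" unfolding W1_def sv_gph_def sv_dom_def by force
    moreover have "{y. (x, y) \<in> W1} = F x" unfolding W1_def sv_gph_def by simp
    ultimately show "(x, y) \<in> R1 \<longleftrightarrow> x \<in> ri (sv_dom F) \<and> y \<in> ri (F x)"
      using fiber[OF R1, of x y] by (simp add: ri_eq)
  qed
  have fx2: "\<And>z y. (y, z) \<in> R2 \<longleftrightarrow> z \<in> ri (sv_rge G) \<and> y \<in> ri (sv_inv G z)"
  proof -
    fix z y
    have "fst ` V2 = sv_rge G" unfolding V2_def W2_def sv_gph_def sv_rge_def by force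
    moreover have "{y. (z, y) \<in> V2} = sv_inv G z" unfolding V2_def W2_def sv_gph_def sv_inv_def
      by force
    moreover have "(y, z) \<in> R2 \<longleftrightarrow> (z, y) \<in> S2" unfolding S2_def by force
    ultimately show "(y, z) \<in> R2 \<longleftrightarrow> z \<in> ri (sv_rge G) \<and> y \<in> ri (sv_inv G z)"
      using fiber[OF S2, of z y] by (simp add: ri_eq)
  qed
  have RHS: "(ri (sv_dom F) \<times> ri (sv_rge G)) \<inter> {(x, z). ri (F x) \<inter> ri (sv_inv G z) \<noteq> {}}
      = {(x, z). \<exists>y. (x, y) \<in> R1 \<and> (y, z) \<in> R2}"
    using fx1 fx2 by blast
  define h :: "'a \<times> 'b \<times> 'c \<Rightarrow> ('a \<times> 'b) \<times> 'c" where "h = (\<lambda>(x, y, z). ((x, y), z))"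
  have lh: "linear h" unfolding h_def by (rule linearI) auto
  have ih: "inj h" unfolding h_def by (simp add: inj_on_def)
  define cyl1 :: "(('a \<times> 'b) \<times> 'c) set" where "cyl1 = R1 \<times> UNIV"
  define cyl2 where "cyl2 = h ` (UNIV \<times> R2)"
  have cv1: "convex cyl1" unfolding cyl1_def using R1(1) convex_Times convex_UNIV by blast
  have cvU2: "convex (UNIV \<times> R2 :: ('a \<times> 'b \<times> 'c) set)" using R2(1) convex_Times convex_UNIV by blast
  have cv2: "convex cyl2" unfolding cyl2_def using convex_linear_image[OF lh cvU2] .
  have ri1: "rel_interior cyl1 = cyl1" unfolding cyl1_def
    using rel_interior_Times[OF R1(1) convex_UNIV] R1(2) by simp
  have riU: "rel_interior (UNIV \<times> R2 :: ('a \<times> 'b \<times> 'c) set) = UNIV \<times> R2"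
    using rel_interior_Times[OF convex_UNIV R2(1)] R2(2) by simp
  have ri2: "rel_interior cyl2 = cyl2" unfolding cyl2_def
    using rel_interior_convex_linear_image[OF lh cvU2, symmetric] riU by (simp only:)
  define E where "E = cyl1 \<inter> cyl2"
  have Eeq: "E = {((x, y), z). (x, y) \<in> R1 \<and> (y, z) \<in> R2}"
    unfolding E_def cyl1_def cyl2_def h_def by force
  have lsnd: "linear (snd :: 'a \<times> 'b \<Rightarrow> 'b)" by (rule linear_snd)
  have lfst: "linear (fst :: 'b \<times> 'c \<Rightarrow> 'b)" by (rule linear_fst)
  have rr: "ri (sv_rge F) = snd ` R1"
  proof -
    have "sv_rge F = snd ` W1" unfolding W1_def sv_gph_def sv_rge_def by force
    then show ?thesis using proj[OF lsnd R1] by (simp add: ri_eq)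
  qed
  have rd: "ri (sv_dom G) = fst ` R2"
  proof -
    have "sv_dom G = fst ` W2" unfolding W2_def sv_gph_def sv_dom_def by force
    then show ?thesis using proj[OF lfst R2] by (simp add: ri_eq)
  qed
  obtain y0 where "y0 \<in> snd ` R1" "y0 \<in> fst ` R2" using assms(3) rr rd by blast
  then obtain x0 z0 where "(x0, y0) \<in> R1" "(y0, z0) \<in> R2" by force
  then have "((x0, y0), z0) \<in> E" using Eeq by simp
  then have ne: "rel_interior cyl1 \<inter> rel_interior cyl2 \<noteq> {}" using ri1 ri2 E_def by blast
  have cvE: "convex E" unfolding E_def using cv1 cv2 convex_Int by blast
  have riE: "rel_interior E = E" unfolding E_def
    using convex_rel_interior_inter_two[OF cv1 cv2 ne] ri1 ri2 by simp
  define D :: "(('a \<times> 'b) \<times> 'c) set" where "D = {((x, y), z). (x, y) \<in> W1 \<and> (y, z) \<in> W2}"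
  have ED: "E \<subseteq> D" unfolding Eeq D_def using R1(3) R2(3) by auto
  have cl1: "closure cyl1 = closure R1 \<times> UNIV" unfolding cyl1_def by (simp add: closure_Times)
  have cl2: "closure cyl2 = h ` (UNIV \<times> closure R2)" unfolding cyl2_def
    using closure_injective_linear_image[OF lh ih, of "UNIV \<times> R2"] by (simp add: closure_Times)
  have "D \<subseteq> closure cyl1 \<inter> closure cyl2"
    unfolding cl1 cl2 D_def h_def using R1(4) R2(4) by force
  also have "\<dots> \<subseteq> closure (rel_interior cyl1 \<inter> rel_interior cyl2)"
    using convex_closure_rel_interior_Int[of "{cyl1, cyl2}"] cv1 cv2 ne by auto
  finally have DE: "D \<subseteq> closure E" using ri1 ri2 E_def by simp
  define \<pi> :: "('a \<times> 'b) \<times> 'c \<Rightarrow> 'a \<times> 'c" where "\<pi> = (\<lambda>((x, y), z). (x, z))"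
  have lpi: "linear \<pi>" unfolding \<pi>_def by (rule linearI) auto
  have "rel_interior (\<pi> ` D) = \<pi> ` E" using proj[OF lpi cvE riE ED DE] .
  moreover have "\<pi> ` D = sv_gph (sv_comp G F)"
    unfolding \<pi>_def D_def W1_def W2_def sv_gph_def sv_comp_def by force
  moreover have "\<pi> ` E = {(x, z). \<exists>y. (x, y) \<in> R1 \<and> (y, z) \<in> R2}"
    unfolding \<pi>_def Eeq by force
  ultimately show ?thesis using RHS by (simp add: ri_eq)
qed

end
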